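(* For every set $U\subset\mathcal{A}_0(\overline D)$ we have $$U^*=\overline{(\mathrm{cm}(U))^{\perp}},$$ where the closure is taken in the space $\mathcal{A}$.
   Context: $D=\{z:|z|<1\}$, $\overline D$ its closure. $\mathcal{A}$ is the space of functions $f(z)=\sum_{k\ge0}a_k(f)z^k$ analytic in $D$, with the topology of locally uniform convergence; $\mathcal{A}_0=\{f\in\mathcal{A}: a_0(f)=1\}$. $\mathcal{A}(\overline D)$ is the set of functions analytic in some disk $\{|z|<R\}$ with $R>1$, and $\mathcal{A}_0(\overline D)=\{g\in\mathcal{A}(\overline D):a_0(g)=1\}$. The Hadamard product is $(f*g)(z)=\sum_{k\ge0}a_k(f)a_k(g)z^k$. For $U\subset\mathcal{A}_0$, $U^*=\{g\in\mathcal{A}_0:(f*g)(z)\ne0 \text{ for all } z\in D,\ f\in U\}$. For $x\in\overline D$, $(P_xf)(z)=f(xz)$, and $\mathrm{cm}(U)=\{P_xf: f\in U,\ x\in\overline D\}$. For $U\subset\mathcal{A}_0(\overline D)$, $U^{\perp}=\{h\in\mathcal{A}_0:(g*h)(1)\ne0\text{ for all } g\in U\}$. *)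

theory Defs
  imports "HOL-Complex_Analysis.Complex_Analysis"
begin

text \<open>Functions analytic in the unit disk D are represented as functions
  complex => complex holomorphic on ball 0 1 (values outside D are irrelevant).\<close>

definition coeffA :: "(complex \<Rightarrow> complex) \<Rightarrow> nat \<Rightarrow> complex" where
  "coeffA f k = (deriv ^^ k) f 0 / of_nat (fact k)"

definition A_space :: "(complex \<Rightarrow> complex) set" where
  "A_space = {f. f holomorphic_on ball 0 1}"

definition A0 :: "(complex \<Rightarrow> complex) set" where
  "A0 = {f \<in> A_space. coeffA f 0 = 1}"

definition A_cl :: "(complex \<Rightarrow> complex) set" where
  "A_cl = {g. \<exists>R>1. g holomorphic_on ball 0 R}"

definition A0_cl :: "(complex \<Rightarrow> complex) set" where
  "A0_cl = {g \<in> A_cl. coeffA g 0 = 1}"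

definition hadamard :: "(complex \<Rightarrow> complex) \<Rightarrow> (complex \<Rightarrow> complex) \<Rightarrow> complex \<Rightarrow> complex" where
  "hadamard f g z = (\<Sum>k. coeffA f k * coeffA g k * z ^ k)"

definition dual :: "(complex \<Rightarrow> complex) set \<Rightarrow> (complex \<Rightarrow> complex) set" where
  "dual U = {g \<in> A0. \<forall>f\<in>U. \<forall>z\<in>ball 0 1. hadamard f g z \<noteq> 0}"

definition Px :: "complex \<Rightarrow> (complex \<Rightarrow> complex) \<Rightarrow> (complex \<Rightarrow> complex)" where
  "Px x f = (\<lambda>z. f (x * z))"

definition cm :: "(complex \<Rightarrow> complex) set \<Rightarrow> (complex \<Rightarrow> complex) set" where
  "cm U = {Px x f | f x. f \<in> U \<and> x \<in> cball 0 1}"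

definition perp :: "(complex \<Rightarrow> complex) set \<Rightarrow> (complex \<Rightarrow> complex) set" where
  "perp U = {h \<in> A0. \<forall>g\<in>U. hadamard g h 1 \<noteq> 0}"

text \<open>Closure in A w.r.t. locally uniform convergence on D: h is in the closure
  iff every basic neighbourhood (uniform closeness on a compact disk of radius r<1)
  meets S.\<close>
definition A_closure :: "(complex \<Rightarrow> complex) set \<Rightarrow> (complex \<Rightarrow> complex) set" where
  "A_closure S = {h \<in> A_space. \<forall>r<1. \<forall>e>0. \<exists>g\<in>S. \<forall>z\<in>cball 0 r. cmod (g z - h z) < e}"

end

theory Submission
  imports Defs
begin

lemma coeff0: "coeffA f 0 = f 0"
  by (simp add: coeffA_def)

lemma sums_coeff:
  assumes "f holomorphic_on ball 0 R" "w \<in> ball 0 R"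
  shows "(\<lambda>k. coeffA f k * w ^ k) sums f w"
  using holomorphic_power_series[OF assms] by (simp add: coeffA_def)

lemma coeff_bound:
  assumes hol: "f holomorphic_on ball 0 R" and s: "0 < s" "s < R"
    and B: "\<And>w. norm w = s \<Longrightarrow> norm (f w) \<le> B"
  shows "norm (coeffA f k) \<le> B / s ^ k"
proof -
  have sub: "cball 0 s \<subseteq> ball (0::complex) R" using s by auto
  have "norm ((deriv ^^ k) f 0) \<le> fact k * B / s ^ k"
  proof (rule Cauchy_inequality)
    show "f holomorphic_on ball 0 s" using hol sub ball_subset_cball holomorphic_on_subset by blast
    show "continuous_on (cball 0 s) f"
      using hol sub holomorphic_on_imp_continuous_on holomorphic_on_subset by blast
  qed (use s B in auto)
  then show ?thesis
    by (simp add: coeffA_def norm_divide field_simps)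
qed

lemma coeff_bound_ex:
  assumes hol: "f holomorphic_on ball 0 R" and s: "0 < s" "s < R"
  shows "\<exists>B. \<forall>k. norm (coeffA f k) \<le> B / s ^ k"
proof -
  have sub: "cball 0 s \<subseteq> ball (0::complex) R" using s by auto
  have "continuous_on (cball 0 s) f"
    using hol sub holomorphic_on_imp_continuous_on holomorphic_on_subset by blast
  then have "bounded (f ` cball 0 s)"
    by (simp add: compact_continuous_image compact_imp_bounded)
  then obtain B where "\<forall>y\<in>f ` cball 0 s. norm y \<le> B"
    unfolding bounded_iff by blast
  then have B: "\<And>w. w \<in> cball 0 s \<Longrightarrow> norm (f w) \<le> B" by blast
  show ?thesis
    by (intro exI allI coeff_bound[OF hol s]) (use B in auto)
qed

lemma coeff_diff:
  assumes "f holomorphic_on ball 0 R" "g holomorphic_on ball 0 R" "0 < R"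
  shows "coeffA (\<lambda>w. f w - g w) k = coeffA f k - coeffA g k"
  using higher_deriv_diff[OF assms(1,2) open_ball, of 0 k] assms(3)
  by (simp add: coeffA_def diff_divide_distrib)

lemma coeff_Px:
  assumes "f holomorphic_on ball 0 R" "norm x \<le> 1" "0 < R"
  shows "coeffA (Px x f) k = x ^ k * coeffA f k"
proof -
  have "(deriv ^^ k) (\<lambda>w. f (x * w)) 0 = x ^ k * (deriv ^^ k) f (x * 0)"
  proof (rule higher_deriv_compose_linear[OF assms(1) open_ball open_ball])
    show "0 \<in> ball (0::complex) R" using assms by simp
    fix w :: complex assume "w \<in> ball 0 R"
    have "norm x * norm w \<le> norm w" using assms(2) by (simp add: mult_left_le_one_le)
    then show "x * w \<in> ball 0 R" using \<open>w \<in> ball 0 R\<close>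
      by (simp add: norm_mult)
  qed
  then show ?thesis by (simp add: coeffA_def Px_def)
qed

lemma hadamard_Px_left:
  assumes "f holomorphic_on ball 0 R" "norm x \<le> 1" "0 < R"
  shows "hadamard (Px x f) g 1 = hadamard f g x"
  unfolding hadamard_def coeff_Px[OF assms] by (simp add: mult_ac)

lemma hadamard_Px_right:
  assumes "g holomorphic_on ball 0 R" "norm r \<le> 1" "0 < R"
  shows "hadamard f (Px r g) z = hadamard f g (r * z)"
  unfolding hadamard_def coeff_Px[OF assms] by (simp add: mult_ac power_mult_distrib)


lemma term_bound:
  fixes a b w :: complex
  assumes "norm a \<le> B1 / \<rho> ^ k" "norm b \<le> E / s ^ k" "norm w \<le> s"
    "0 < s" "0 < \<rho>" "0 \<le> B1" "0 \<le> E"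
  shows "norm (a * b * w ^ k) \<le> B1 * E * (1 / \<rho>) ^ k"
proof -
  have "norm (a * b * w ^ k) = norm a * norm b * norm w ^ k"
    by (simp add: norm_mult norm_power)
  also have "\<dots> \<le> (B1 / \<rho> ^ k) * (E / s ^ k) * s ^ k"
    using assms by (intro mult_mono power_mono) auto
  also have "\<dots> = B1 * E * (1 / \<rho>) ^ k"
    using assms by (simp add: field_simps power_one_over)
  finally show ?thesis .
qed

lemma coeff_bound_nonneg:
  assumes "\<And>k. norm (coeffA f k) \<le> B / s ^ k"
  shows "0 \<le> B"
  using assms[of 0] by (metis div_by_1 norm_ge_zero order_trans power_0)

lemma summable_hadamard:
  assumes f: "f holomorphic_on ball 0 R" "1 < R" and h: "h holomorphic_on ball 0 1"
    and w: "norm w < 1"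
  shows "summable (\<lambda>k. coeffA f k * coeffA h k * w ^ k)"
proof -
  define \<rho> where "\<rho> = (1 + R) / 2"
  have \<rho>: "1 < \<rho>" "\<rho> < R" using f(2) by (auto simp: \<rho>_def)
  obtain B1 where B1: "\<And>k. norm (coeffA f k) \<le> B1 / \<rho> ^ k"
    using coeff_bound_ex[OF f(1), of \<rho>] \<rho> by auto
  define s where "s = (1 + norm w) / 2"
  have nw: "0 \<le> norm w" by simp
  have s1: "0 < s" using w unfolding s_def by (simp add: field_simps add_pos_nonneg)
  have s2: "s < 1" using w unfolding s_def by (simp add: field_simps)
  have s3: "norm w \<le> s" using w unfolding s_def by (simp add: field_simps)
  note s = s1 s2 s3
  obtain B2 where B2: "\<And>k. norm (coeffA h k) \<le> B2 / s ^ k"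
    using coeff_bound_ex[OF h, of s] s by auto
  have b: "norm (coeffA f k * coeffA h k * w ^ k) \<le> (B1 * B2) * (1 / \<rho>) ^ k" for k
    by (rule term_bound[OF B1 B2 s(3) s(1)]) (use \<rho> coeff_bound_nonneg[OF B1] coeff_bound_nonneg[OF B2] in auto)
  have "summable (\<lambda>k. (B1 * B2) * (1 / \<rho>) ^ k)"
    using \<rho> by (intro summable_mult summable_geometric) auto
  then show ?thesis
    using b by (rule summable_comparison_test'[where N=0])
qed

lemma hadamard_holo:
  assumes f: "f holomorphic_on ball 0 R" "1 < R" and h: "h holomorphic_on ball 0 1"
  shows "hadamard f h holomorphic_on ball 0 1"
proof (rule power_series_holomorphic[where a="\<lambda>k. coeffA f k * coeffA h k"])
  fix w :: complex assume "w \<in> ball 0 1"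
  then have "norm w < 1" by simp
  from summable_sums[OF summable_hadamard[OF f h this]]
  show "(\<lambda>n. coeffA f n * coeffA h n * (w - 0) ^ n) sums hadamard f h w"
    by (simp add: hadamard_def)
qed

lemma compact_in_ball:
  assumes "compact K" "K \<subseteq> ball (0::complex) 1"
  shows "\<exists>s. 0 < s \<and> s < 1 \<and> K \<subseteq> cball 0 s"
proof (cases "K = {}")
  case True then show ?thesis by (intro exI[of _ "1/2"]) auto
next
  case False
  have "compact (norm ` K)"
    using assms(1) by (intro compact_continuous_image continuous_on_norm_id)
  then obtain m where m: "m \<in> norm ` K" "\<And>t. t \<in> norm ` K \<Longrightarrow> t \<le> m"
    using compact_attains_sup[of "norm ` K"] False by blast
  have "m < 1" using m(1) assms(2) by auto
  show ?thesis
    using m \<open>m < 1\<close> by (intro exI[of _ "max m (1/2)"]) (force simp: subset_iff le_max_iff_disj)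
qed


lemma ulim:
  assumes f: "f holomorphic_on ball 0 R" "1 < R" and h: "h holomorphic_on ball 0 1"
    and hs: "\<And>n. hs n holomorphic_on ball 0 1"
    and close: "\<And>n w. w \<in> cball 0 (1 - 1 / (real n + 2)) \<Longrightarrow> cmod (hs n w - h w) < 1 / (real n + 1)"
    and s: "s < 1"
  shows "uniform_limit (cball 0 s) (\<lambda>n. hadamard f (hs n)) (hadamard f h) sequentially"
proof -
  define s' where "s' = max s (1/2)"
  have s'1: "0 < s'" "s' < 1" "s \<le> s'" using s by (auto simp: s'_def)
  define \<rho> where "\<rho> = (1 + R) / 2"
  have \<rho>: "1 < \<rho>" "\<rho> < R" using f(2) by (auto simp: \<rho>_def)
  obtain B1 where B1: "\<And>k. norm (coeffA f k) \<le> B1 / \<rho> ^ k"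
    using coeff_bound_ex[OF f(1), of \<rho>] \<rho> by auto
  have B10: "0 \<le> B1" by (rule coeff_bound_nonneg[OF B1])
  define S where "S = (\<Sum>k. (1 / \<rho>) ^ k)"
  have sumg: "summable (\<lambda>k. (1 / \<rho>) ^ k)" using \<rho> by (intro summable_geometric) auto
  have S0: "0 \<le> S" unfolding S_def using sumg \<rho> by (intro suminf_nonneg) auto
  have key: "cmod (hadamard f (hs n) z - hadamard f h z) \<le> B1 * (1 / (real n + 1)) * S"
    if n: "s' \<le> 1 - 1 / (real n + 2)" and z: "norm z \<le> s'" for n z
  proof -
    have z1: "norm z < 1" using z s'1 by linarith
    have cd: "coeffA (\<lambda>w. hs n w - h w) k = coeffA (hs n) k - coeffA h k" for k
      by (rule coeff_diff[OF hs h]) simp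
    have cb: "norm (coeffA (\<lambda>w. hs n w - h w) k) \<le> (1 / (real n + 1)) / s' ^ k" for k
    proof (rule coeff_bound[of _ 1])
      show "(\<lambda>w. hs n w - h w) holomorphic_on ball 0 1"
        using hs h by (intro holomorphic_on_diff)
      fix w :: complex assume "norm w = s'"
      then have "w \<in> cball 0 (1 - 1 / (real n + 2))" using n by simp
      then show "cmod (hs n w - h w) \<le> 1 / (real n + 1)" using close less_imp_le by blast
    qed (use s'1 in auto)
    have "hadamard f (hs n) z - hadamard f h z
        = (\<Sum>k. coeffA f k * coeffA (\<lambda>w. hs n w - h w) k * z ^ k)"
      unfolding hadamard_def cd
      by (subst suminf_diff[OF summable_hadamard[OF f hs z1] summable_hadamard[OF f h z1]])
         (simp add: algebra_simps)
    also have "norm \<dots> \<le> (\<Sum>k. B1 * (1 / (real n + 1)) * (1 / \<rho>) ^ k)"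
    proof (rule norm_suminf_le)
      fix k
      show "norm (coeffA f k * coeffA (\<lambda>w. hs n w - h w) k * z ^ k) \<le> B1 * (1 / (real n + 1)) * (1 / \<rho>) ^ k"
        by (rule term_bound[OF B1 cb z]) (use s'1 \<rho> B10 in auto)
      show "summable (\<lambda>k. B1 * (1 / (real n + 1)) * (1 / \<rho>) ^ k)"
        using sumg by (rule summable_mult)
    qed
    also have "\<dots> = B1 * (1 / (real n + 1)) * S"
      unfolding S_def using sumg by (rule suminf_mult)
    finally show ?thesis .
  qed
  show ?thesis
  proof (rule uniform_limitI)
    fix e :: real assume e: "e > 0"
    obtain N :: nat where N: "real N > max (B1 * S / e) (1 / (1 - s'))"
      using reals_Archimedean2 by blast
    show "\<forall>\<^sub>F n in sequentially. \<forall>x\<in>cball 0 s. dist (hadamard f (hs n) x) (hadamard f h x) < e"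
      unfolding eventually_sequentially
    proof (intro exI allI impI ballI)
      fix n x assume nN: "N \<le> n" and x: "x \<in> cball (0::complex) s"
      have nN': "real N \<le> real n" using nN by simp
      have "1 / (1 - s') < real n + 2" using N nN' by linarith
      then have "1 / (real n + 2) < 1 - s'"
        using s'1 by (simp add: field_simps)
      then have n1: "s' \<le> 1 - 1 / (real n + 2)" by linarith
      have "B1 * S / e < real n + 1" using N nN' by linarith
      then have "B1 * S < e * (real n + 1)" using e by (simp add: field_simps)
      then have lt: "B1 * (1 / (real n + 1)) * S < e" by (simp add: field_simps)
      have "norm x \<le> s'" using x s'1 by simp
      from key[OF n1 this] lt
      show "dist (hadamard f (hs n) x) (hadamard f h x) < e"
        by (simp add: dist_norm)
    qed
  qed
qed


lemma A0_clD:
  assumes "f \<in> A0_cl"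
  obtains R where "1 < R" "f holomorphic_on ball 0 R" "f 0 = 1"
  using assms by (auto simp: A0_cl_def A_cl_def coeff0)

lemma perp_hadamard:
  assumes U: "U \<subseteq> A0_cl" and f: "f \<in> U" and g: "g \<in> perp (cm U)" and x: "norm x \<le> 1"
  shows "hadamard f g x \<noteq> 0"
proof -
  obtain R where R: "1 < R" "f holomorphic_on ball 0 R" using A0_clD U f by blast
  have "Px x f \<in> cm U" using f x unfolding cm_def by auto
  then have "hadamard (Px x f) g 1 \<noteq> 0" using g unfolding perp_def by blast
  then show ?thesis using hadamard_Px_left[OF R(2) x] R(1) by simp
qed

theorem mainTheorem2:
  assumes "U \<subseteq> A0_cl"
  shows "dual U = A_closure (perp (cm U))"
proof
  show "dual U \<subseteq> A_closure (perp (cm U))"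
  proof
    fix g assume g: "g \<in> dual U"
    then have gh: "g holomorphic_on ball 0 1" and g0: "g 0 = 1"
      by (auto simp: dual_def A0_def A_space_def coeff0)
    have Pr: "Px (of_real r) g \<in> perp (cm U)" if r: "0 \<le> r" "r < 1" for r :: real
    proof -
      have "(g \<circ> (\<lambda>z. of_real r * z)) holomorphic_on ball 0 1"
      proof (rule holomorphic_on_compose_gen[OF _ gh])
        show "(\<lambda>z. complex_of_real r * z) holomorphic_on ball 0 1" by (intro holomorphic_intros)
        show "(\<lambda>z. complex_of_real r * z) ` ball 0 1 \<subseteq> ball 0 1"
        proof
          fix y assume "y \<in> (\<lambda>z. complex_of_real r * z) ` ball 0 1"
          then obtain z where z: "norm z < 1" "y = of_real r * z" by auto
          have "r * norm z < 1" using r z(1)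
            by (metis le_less_trans mult_le_cancel_right1 mult.commute norm_ge_zero less_imp_le mult_less_cancel_left1 mult_left_le_one_le)
          then show "y \<in> ball 0 1" using z r by (simp add: norm_mult)
        qed
      qed
      then have hol: "Px (of_real r) g holomorphic_on ball 0 1" by (simp add: Px_def o_def)
      have A0: "Px (of_real r) g \<in> A0"
        using hol g0 by (simp add: A0_def A_space_def coeff0 Px_def)
      have "hadamard G (Px (of_real r) g) 1 \<noteq> 0" if G: "G \<in> cm U" for G
      proof -
        obtain f x where fx: "G = Px x f" "f \<in> U" "x \<in> cball 0 1" using G unfolding cm_def by auto
        obtain R where R: "1 < R" "f holomorphic_on ball 0 R" using A0_clD assms fx(2) by blast
        have xn: "norm x \<le> 1" using fx(3) by simp
        have rn: "norm (complex_of_real r) \<le> 1" using r by simp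
        have "hadamard G (Px (of_real r) g) 1 = hadamard f (Px (of_real r) g) x"
          using fx(1) hadamard_Px_left[OF R(2) xn] R(1) by simp
        also have "\<dots> = hadamard f g (of_real r * x)"
          using hadamard_Px_right[OF gh rn] by simp
        finally have eq: "hadamard G (Px (of_real r) g) 1 = hadamard f g (of_real r * x)" .
        have "r * norm x < 1"
          using r xn by (metis le_less_trans mult_left_le_one_le norm_ge_zero mult.commute less_eq_real_def mult_le_one) 
        then have "of_real r * x \<in> ball 0 1" using r by (simp add: norm_mult)
        then show ?thesis using g fx(2) eq unfolding dual_def by auto
      qed
      then show ?thesis using A0 unfolding perp_def by blast
    qed
    show "g \<in> A_closure (perp (cm U))"
      unfolding A_closure_def
    proof (intro CollectI conjI allI impI)
      show "g \<in> A_space" using gh by (simp add: A_space_def)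
      fix r0 :: real and e :: real assume r0: "r0 < 1" and e: "0 < e"
      define t1 where "t1 = (max r0 0 + 1) / 2"
      have t1: "t1 < 1" "r0 \<le> t1" "0 \<le> t1" using r0 by (auto simp: t1_def field_simps)
      have "cball 0 t1 \<subseteq> ball (0::complex) 1" using t1 by auto
      then have "continuous_on (cball 0 t1) g"
        using gh holomorphic_on_imp_continuous_on holomorphic_on_subset by blast
      then have "uniformly_continuous_on (cball 0 t1) g"
        by (intro compact_uniformly_continuous) auto
      then obtain d where d: "d > 0"
        and dd: "\<And>x x'. x \<in> cball 0 t1 \<Longrightarrow> x' \<in> cball 0 t1 \<Longrightarrow> dist x' x < d \<Longrightarrow> dist (g x') (g x) < e"
        unfolding uniformly_continuous_on_def using e by metis
      define r where "r = max (1/2) (1 - d/2)"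
      have r: "0 \<le> r" "r < 1" "1 - r < d" "r \<le> 1" using d by (auto simp: r_def)
      show "\<exists>G\<in>perp (cm U). \<forall>z\<in>cball 0 r0. cmod (G z - g z) < e"
      proof (intro bexI ballI)
        show "Px (of_real r) g \<in> perp (cm U)" using Pr r by blast
        fix z :: complex assume z: "z \<in> cball 0 r0"
        then have zn: "norm z \<le> t1" using t1 by simp
        have z1: "z \<in> cball 0 t1" using zn by simp
        have "r * norm z \<le> norm z" using r by (simp add: mult_left_le_one_le)
        then have z2: "of_real r * z \<in> cball 0 t1" using zn r by (simp add: norm_mult)
        have "norm z \<le> 1" using zn t1 by simp
        have "dist (of_real r * z) z = (1 - r) * norm z"
        proof -
          have "of_real r * z - z = - (of_real (1 - r) * z)" by (simp add: algebra_simps)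
          moreover have "cmod (1 - complex_of_real r) = 1 - r"
            using r by (metis abs_of_nonneg diff_ge_0_iff_ge less_imp_le norm_of_real of_real_1 of_real_diff)
          ultimately show ?thesis using r by (simp add: dist_norm norm_mult)
        qed
        also have "\<dots> \<le> 1 - r" using \<open>norm z \<le> 1\<close> r by (simp add: mult_left_le)
        finally have "dist (of_real r * z) z < d" using r by linarith
        from dd[OF z1 z2 this]
        show "cmod (Px (of_real r) g z - g z) < e" by (simp add: Px_def dist_norm)
      qed
    qed
  qed
next
  show "A_closure (perp (cm U)) \<subseteq> dual U"
  proof
    fix h assume h: "h \<in> A_closure (perp (cm U))"
    then have hh: "h holomorphic_on ball 0 1" by (simp add: A_closure_def A_space_def)
    have happ: "\<exists>g\<in>perp (cm U). \<forall>z\<in>cball 0 r. cmod (g z - h z) < e" if "r < 1" "e > 0" for r e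
      using h that unfolding A_closure_def by blast
    have perpA: "g holomorphic_on ball 0 1 \<and> g 0 = 1" if "g \<in> perp (cm U)" for g
      using that by (simp add: perp_def A0_def A_space_def coeff0)
    have h0: "h 0 = 1"
    proof (rule ccontr)
      assume "h 0 \<noteq> 1"
      then have "cmod (1 - h 0) > 0" by simp
      from happ[OF _ this, of 0] obtain g where g: "g \<in> perp (cm U)" "cmod (g 0 - h 0) < cmod (1 - h 0)"
        by auto
      then show False using perpA[OF g(1)] by simp
    qed
    have "\<forall>n::nat. \<exists>g. g \<in> perp (cm U) \<and> (\<forall>w\<in>cball 0 (1 - 1 / (real n + 2)). cmod (g w - h w) < 1 / (real n + 1))"
    proof
      fix n :: nat
      have "1 - 1 / (real n + 2) < 1" by simp
      from happ[OF this, of "1 / (real n + 1)"] show "\<exists>g. g \<in> perp (cm U) \<and> (\<forall>w\<in>cball 0 (1 - 1 / (real n + 2)). cmod (g w - h w) < 1 / (real n + 1))"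
        by auto
    qed
    then obtain hs where hs: "\<And>n. hs n \<in> perp (cm U)"
      and hsc: "\<And>n w. w \<in> cball 0 (1 - 1 / (real n + 2)) \<Longrightarrow> cmod (hs n w - h w) < 1 / (real n + 1)"
      by metis
    have hsh: "\<And>n. hs n holomorphic_on ball 0 1" using hs perpA by blast
    have "hadamard f h z \<noteq> 0" if f: "f \<in> U" and z: "z \<in> ball 0 1" for f z
    proof -
      obtain R where R: "1 < R" "f holomorphic_on ball 0 R" "f 0 = 1" using A0_clD assms f by blast
      have G0: "hadamard f h 0 = 1"
        using R(3) h0 by (simp add: hadamard_def coeff0)
      show ?thesis
      proof (cases "hadamard f h constant_on ball 0 1")
        case True
        then obtain c where c: "\<And>w. w \<in> ball 0 1 \<Longrightarrow> hadamard f h w = c"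
          unfolding constant_on_def by blast
        have "hadamard f h z = hadamard f h 0" using c[OF z] c[of 0] by simp
        then show ?thesis using G0 by simp
      next
        case False
        show ?thesis
        proof (rule Hurwitz_no_zeros[of "ball 0 1" "\<lambda>n. hadamard f (hs n)" "hadamard f h" z])
          show "open (ball (0::complex) 1)" "connected (ball (0::complex) 1)" by auto
          show "\<And>n. hadamard f (hs n) holomorphic_on ball 0 1"
            using hadamard_holo[OF R(2,1) hsh] .
          show "hadamard f h holomorphic_on ball 0 1"
            using hadamard_holo[OF R(2,1) hh] .
          show "\<not> hadamard f h constant_on ball 0 1" using False .
          show "z \<in> ball 0 1" using z .
          fix K :: "complex set" assume K: "compact K" "K \<subseteq> ball 0 1"
          obtain s where s: "0 < s" "s < 1" "K \<subseteq> cball 0 s" using compact_in_ball[OF K] by blast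
          show "uniform_limit K (\<lambda>n. hadamard f (hs n)) (hadamard f h) sequentially"
            using uniform_limit_on_subset[OF ulim[OF R(2,1) hh hsh hsc s(2)] s(3)] .
        next
          fix n w assume "w \<in> ball (0::complex) 1"
          then show "hadamard f (hs n) w \<noteq> 0"
            using perp_hadamard[OF assms f hs] by simp
        qed
      qed
    qed
    then show "h \<in> dual U"
      using hh h0 by (simp add: dual_def A0_def A_space_def coeff0)
  qed
qed

end
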